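(* Let $\eta,\lambda>0$ with $\eta\lambda\le\tfrac12$, let $x(0)$ satisfy $\|x(0)\|_2^2\ge\pi^2\rho\eta$, and $x(t+1)=(1-\eta\lambda)x(t)-\eta\nabla L(x(t))$. Let $T_0=\left\lceil\frac{1}{2\eta\lambda}\ln\frac{2\|x(0)\|_2^2}{\rho\pi^2\eta}\right\rceil$. Then $$\min_{t=0,\ldots,T_0}\|\nabla L(\bar x(t))\|_2^2\le 8\pi^4\rho^2\lambda\eta .$$
   Context: $L:\mathbb{R}^d\setminus\{0\}\to\mathbb{R}$ is $C^2$ and scale invariant, i.e. $L(cx)=L(x)$ for all $c>0$, $x\ne0$. $\rho:=\max_{\|x\|_2=1}\|\nabla^2L(x)\|_2>0$ (spectral norm). For $x\neq0$, $\bar x:=x/\|x\|_2$. *)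

theory Defs
  imports "HOL-Analysis.Analysis"
begin

end

theory Submission
  imports Defs
begin

lemma grad_hom:
  fixes L :: "'a::euclidean_space \<Rightarrow> real" and gradL :: "'a \<Rightarrow> 'a"
  assumes grad: "\<And>y. y \<noteq> 0 \<Longrightarrow> (L has_derivative (\<lambda>h. gradL y \<bullet> h)) (at y)"
    and scale_inv: "\<And>c y. c > 0 \<Longrightarrow> y \<noteq> 0 \<Longrightarrow> L (c *\<^sub>R y) = L y"
    and c: "c > 0" and y: "y \<noteq> 0"
  shows "c *\<^sub>R gradL (c *\<^sub>R y) = gradL y"
proof -
  have lin: "((\<lambda>z. c *\<^sub>R z) has_derivative (\<lambda>h. c *\<^sub>R h)) (at y)"
    by (rule bounded_linear_imp_has_derivative) (simp add: bounded_linear_scaleR_right)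
  have cy: "c *\<^sub>R y \<noteq> 0" using c y by simp
  have d1: "((\<lambda>z. L (c *\<^sub>R z)) has_derivative (\<lambda>h. gradL (c *\<^sub>R y) \<bullet> (c *\<^sub>R h))) (at y)"
    using has_derivative_compose[OF lin grad[OF cy]] .
  have d2: "((\<lambda>z. L (c *\<^sub>R z)) has_derivative (\<lambda>h. gradL y \<bullet> h)) (at y)"
    by (rule has_derivative_transform_within_open[OF grad[OF y], of "-{0}"]) (use y c scale_inv in auto)
  have eq: "(\<lambda>h. gradL (c *\<^sub>R y) \<bullet> (c *\<^sub>R h)) = (\<lambda>h. gradL y \<bullet> h)"
    using has_derivative_unique[OF d1 d2] .
  define v where "v = c *\<^sub>R gradL (c *\<^sub>R y) - gradL y"
  have "v \<bullet> v = 0"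
    using fun_cong[OF eq, of v] by (simp add: v_def inner_diff_left algebra_simps)
  then show ?thesis by (simp add: v_def)
qed

lemma grad_orth:
  fixes L :: "'a::euclidean_space \<Rightarrow> real" and gradL :: "'a \<Rightarrow> 'a"
  assumes grad: "\<And>y. y \<noteq> 0 \<Longrightarrow> (L has_derivative (\<lambda>h. gradL y \<bullet> h)) (at y)"
    and scale_inv: "\<And>c y. c > 0 \<Longrightarrow> y \<noteq> 0 \<Longrightarrow> L (c *\<^sub>R y) = L y"
    and y: "y \<noteq> 0"
  shows "gradL y \<bullet> y = 0"
proof -
  have lin: "((\<lambda>c::real. c *\<^sub>R y) has_derivative (\<lambda>h. h *\<^sub>R y)) (at 1)"
    by (rule bounded_linear_imp_has_derivative) (simp add: bounded_linear_scaleR_left)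
  have d1: "((\<lambda>c::real. L (c *\<^sub>R y)) has_derivative (\<lambda>h. gradL y \<bullet> (h *\<^sub>R y))) (at 1)"
  proof -
    have g1: "(L has_derivative (\<lambda>h. gradL y \<bullet> h)) (at ((\<lambda>c::real. c *\<^sub>R y) 1))"
      using grad[OF y] by simp
    show ?thesis using has_derivative_compose[OF lin g1] .
  qed
  have d2: "((\<lambda>c::real. L (c *\<^sub>R y)) has_derivative (\<lambda>h. 0)) (at 1)"
    by (rule has_derivative_transform_within_open[OF has_derivative_const[of "L y"], of "{0<..}"]) (use y scale_inv in auto)
  have "(\<lambda>h. gradL y \<bullet> (h *\<^sub>R y)) = (\<lambda>h. 0)"
    using has_derivative_unique[OF d1 d2] .
  from fun_cong[OF this, of 1] show ?thesis by simp
qed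

lemma hess_hom:
  fixes L :: "'a::euclidean_space \<Rightarrow> real" and gradL :: "'a \<Rightarrow> 'a"
    and hessL :: "'a \<Rightarrow> 'a \<Rightarrow>\<^sub>L 'a"
  assumes grad: "\<And>y. y \<noteq> 0 \<Longrightarrow> (L has_derivative (\<lambda>h. gradL y \<bullet> h)) (at y)"
    and hess: "\<And>y. y \<noteq> 0 \<Longrightarrow> (gradL has_derivative blinfun_apply (hessL y)) (at y)"
    and scale_inv: "\<And>c y. c > 0 \<Longrightarrow> y \<noteq> 0 \<Longrightarrow> L (c *\<^sub>R y) = L y"
    and c: "c > 0" and y: "y \<noteq> 0"
  shows "hessL (c *\<^sub>R y) = (1 / c^2) *\<^sub>R hessL y"
proof -
  have lin: "((\<lambda>z. c *\<^sub>R z) has_derivative (\<lambda>h. c *\<^sub>R h)) (at y)"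
    by (rule bounded_linear_imp_has_derivative) (simp add: bounded_linear_scaleR_right)
  have cy: "c *\<^sub>R y \<noteq> 0" using c y by simp
  have d1: "((\<lambda>z. gradL (c *\<^sub>R z)) has_derivative (\<lambda>h. hessL (c *\<^sub>R y) (c *\<^sub>R h))) (at y)"
    using has_derivative_compose[OF lin hess[OF cy]] .
  have d0: "((\<lambda>z. (1/c) *\<^sub>R gradL z) has_derivative (\<lambda>h. (1/c) *\<^sub>R hessL y h)) (at y)"
    by (rule has_derivative_scaleR_right[OF hess[OF y]])
  have d2: "((\<lambda>z. gradL (c *\<^sub>R z)) has_derivative (\<lambda>h. (1/c) *\<^sub>R hessL y h)) (at y)"
  proof (rule has_derivative_transform_within_open[OF d0, of "-{0}"])
    fix z :: 'a assume "z \<in> -{0}"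
    then have "z \<noteq> 0" by simp
    from grad_hom[OF grad scale_inv c this] c show "(1/c) *\<^sub>R gradL z = gradL (c *\<^sub>R z)"
      by (metis divide_inverse_commute field_class.field_inverse inverse_eq_divide less_irrefl
           scaleR_one scaleR_scaleR)
  qed (use y in auto)
  have eq: "(\<lambda>h. hessL (c *\<^sub>R y) (c *\<^sub>R h)) = (\<lambda>h. (1/c) *\<^sub>R hessL y h)"
    using has_derivative_unique[OF d1 d2] .
  show ?thesis
  proof (rule blinfun_eqI)
    fix h
    have "c *\<^sub>R hessL (c *\<^sub>R y) h = (1/c) *\<^sub>R hessL y h"
      using fun_cong[OF eq, of h] by (simp add: blinfun.scaleR_right)
    then have "hessL (c *\<^sub>R y) h = (1/c) *\<^sub>R (1/c) *\<^sub>R hessL y h"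
      using c by (metis (no_types, lifting) divide_inverse_commute field_class.field_inverse
          inverse_eq_divide less_irrefl scaleR_one scaleR_scaleR)
    then show "hessL (c *\<^sub>R y) h = ((1 / c^2) *\<^sub>R hessL y) h"
      by (simp add: power2_eq_square scaleR_blinfun.rep_eq)
  qed
qed

lemma hess_bound:
  fixes L :: "'a::euclidean_space \<Rightarrow> real" and gradL :: "'a \<Rightarrow> 'a"
    and hessL :: "'a \<Rightarrow> 'a \<Rightarrow>\<^sub>L 'a"
  assumes grad: "\<And>y. y \<noteq> 0 \<Longrightarrow> (L has_derivative (\<lambda>h. gradL y \<bullet> h)) (at y)"
    and hess: "\<And>y. y \<noteq> 0 \<Longrightarrow> (gradL has_derivative blinfun_apply (hessL y)) (at y)"
    and hess_cont: "continuous_on (- {0}) hessL"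
    and scale_inv: "\<And>c y. c > 0 \<Longrightarrow> y \<noteq> 0 \<Longrightarrow> L (c *\<^sub>R y) = L y"
    and rho_def: "rho = (SUP y\<in>sphere 0 1. norm (hessL y))"
    and y: "y \<noteq> 0"
  shows "norm (hessL y) \<le> rho / norm y ^ 2"
proof -
  have sub: "sphere (0::'a) 1 \<subseteq> -{0}" by auto
  have "continuous_on (sphere 0 1) (\<lambda>y. norm (hessL y))"
    using continuous_on_subset[OF hess_cont sub] by (intro continuous_on_norm)
  then have "compact ((\<lambda>y. norm (hessL y)) ` sphere 0 1)"
    by (rule compact_continuous_image[OF _ compact_sphere])
  then have bdd: "bdd_above ((\<lambda>y. norm (hessL y)) ` sphere 0 1)"
    by (intro bounded_imp_bdd_above compact_imp_bounded)
  define u where "u = (1 / norm y) *\<^sub>R y"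
  have u: "u \<in> sphere 0 1" using y by (simp add: u_def)
  have u0: "u \<noteq> 0" using u by auto
  have ny: "norm y > 0" using y by simp
  have "y = norm y *\<^sub>R u" using y by (simp add: u_def)
  then have "hessL y = (1 / norm y ^ 2) *\<^sub>R hessL u"
    using hess_hom[OF grad hess scale_inv ny u0] by simp
  then have "norm (hessL y) = norm (hessL u) / norm y ^ 2" by simp
  also have "\<dots> \<le> rho / norm y ^ 2"
    using cSUP_upper[OF u bdd] rho_def by (simp add: divide_right_mono)
  finally show ?thesis .
qed

lemma taylor2:
  fixes L :: "'a::euclidean_space \<Rightarrow> real" and gradL :: "'a \<Rightarrow> 'a"
    and hessL :: "'a \<Rightarrow> 'a \<Rightarrow>\<^sub>L 'a"
  assumes grad: "\<And>y. y \<noteq> 0 \<Longrightarrow> (L has_derivative (\<lambda>h. gradL y \<bullet> h)) (at y)"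
    and hess: "\<And>y. y \<noteq> 0 \<Longrightarrow> (gradL has_derivative blinfun_apply (hessL y)) (at y)"
    and seg: "\<And>z. z \<in> closed_segment p q \<Longrightarrow> z \<noteq> 0 \<and> norm (hessL z) \<le> M"
  shows "L q \<le> L p + gradL p \<bullet> (q - p) + M * norm (q - p)^2 / 2"
    and "L q \<ge> L p + gradL p \<bullet> (q - p) - M * norm (q - p)^2 / 2"
proof -
  define d where "d = q - p"
  define K where "K = M * norm d ^ 2"
  define D where "D = gradL p \<bullet> d"
  have inseg: "p + s *\<^sub>R d \<in> closed_segment p q" if "0 \<le> s" "s \<le> 1" for s
    unfolding closed_segment_def d_def using that
    by (auto intro!: exI[of _ s] simp: algebra_simps)
  have lip: "norm (gradL z - gradL p) \<le> M * norm (z - p)" if z: "z \<in> closed_segment p q" for z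
  proof (rule differentiable_bound[OF convex_closed_segment _ _ z])
    fix x assume "x \<in> closed_segment p q"
    then have "x \<noteq> 0" and "norm (hessL x) \<le> M" using seg by auto
    then show "(gradL has_derivative blinfun_apply (hessL x)) (at x within closed_segment p q)"
      and "onorm (blinfun_apply (hessL x)) \<le> M"
      using hess[of x] by (auto intro: has_derivative_at_withinI simp: norm_blinfun.rep_eq[symmetric])
  qed simp
  have der: "((\<lambda>s. L (p + s *\<^sub>R d)) has_real_derivative (gradL (p + s *\<^sub>R d) \<bullet> d)) (at s)"
    if "0 \<le> s" "s \<le> 1" for s
  proof -
    have lin: "((\<lambda>s. p + s *\<^sub>R d) has_derivative (\<lambda>h. h *\<^sub>R d)) (at s)"
      by (rule derivative_eq_intros refl | simp)+
    have nz: "p + s *\<^sub>R d \<noteq> 0" using seg inseg[OF that] by blast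
    show ?thesis
      by (rule has_derivative_imp_has_field_derivative[OF has_derivative_compose[OF lin grad[OF nz]]])
        simp
  qed
  have dbound: "\<bar>gradL (p + s *\<^sub>R d) \<bullet> d - D\<bar> \<le> K * s" if s: "0 \<le> s" "s \<le> 1" for s
  proof -
    have "\<bar>gradL (p + s *\<^sub>R d) \<bullet> d - D\<bar> = \<bar>(gradL (p + s *\<^sub>R d) - gradL p) \<bullet> d\<bar>"
      by (simp add: D_def inner_diff_left)
    also have "\<dots> \<le> norm (gradL (p + s *\<^sub>R d) - gradL p) * norm d"
      by (rule Cauchy_Schwarz_ineq2)
    also have "\<dots> \<le> (M * norm (s *\<^sub>R d)) * norm d"
      using lip[OF inseg[OF s]] by (intro mult_right_mono) auto
    also have "\<dots> = K * s" using s by (simp add: K_def power2_eq_square)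
    finally show ?thesis .
  qed
  have "(\<lambda>s. L (p + s *\<^sub>R d) - s * D - K * s^2 / 2) 1 \<le> (\<lambda>s. L (p + s *\<^sub>R d) - s * D - K * s^2 / 2) 0"
  proof (rule DERIV_nonpos_imp_nonincreasing[of 0 1])
    fix s :: real assume s: "0 \<le> s" "s \<le> 1"
    show "\<exists>y. ((\<lambda>s. L (p + s *\<^sub>R d) - s * D - K * s^2 / 2) has_real_derivative y) (at s) \<and> y \<le> 0"
      by (rule exI, rule conjI, (rule derivative_eq_intros der[OF s] refl)+)
        (use dbound[OF s] in \<open>auto simp: abs_le_iff mult.commute\<close>)
  qed simp
  then show "L q \<le> L p + gradL p \<bullet> (q - p) + M * norm (q - p)^2 / 2"
    by (simp add: d_def K_def D_def)
  have "(\<lambda>s. L (p + s *\<^sub>R d) - s * D + K * s^2 / 2) 0 \<le> (\<lambda>s. L (p + s *\<^sub>R d) - s * D + K * s^2 / 2) 1"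
  proof (rule DERIV_nonneg_imp_nondecreasing[of 0 1])
    fix s :: real assume s: "0 \<le> s" "s \<le> 1"
    show "\<exists>y. ((\<lambda>s. L (p + s *\<^sub>R d) - s * D + K * s^2 / 2) has_real_derivative y) (at s) \<and> y \<ge> 0"
      by (rule exI, rule conjI, (rule derivative_eq_intros der[OF s] refl)+)
        (use dbound[OF s] in \<open>auto simp: abs_le_iff mult.commute\<close>)
  qed simp
  then show "L q \<ge> L p + gradL p \<bullet> (q - p) - M * norm (q - p)^2 / 2"
    by (simp add: d_def K_def D_def)
qed

lemma half_range:
  fixes L :: "'a::euclidean_space \<Rightarrow> real" and gradL :: "'a \<Rightarrow> 'a"
    and hessL :: "'a \<Rightarrow> 'a \<Rightarrow>\<^sub>L 'a"
  assumes grad: "\<And>y. y \<noteq> 0 \<Longrightarrow> (L has_derivative (\<lambda>h. gradL y \<bullet> h)) (at y)"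
    and hess: "\<And>y. y \<noteq> 0 \<Longrightarrow> (gradL has_derivative blinfun_apply (hessL y)) (at y)"
    and hess_cont: "continuous_on (- {0}) hessL"
    and scale_inv: "\<And>c y. c > 0 \<Longrightarrow> y \<noteq> 0 \<Longrightarrow> L (c *\<^sub>R y) = L y"
    and rho_def: "rho = (SUP y\<in>sphere 0 1. norm (hessL y))"
    and u: "norm u = 1" and w: "norm w = 1" and uw: "u \<bullet> w \<ge> 0" and gu: "gradL u = 0"
  shows "\<bar>L w - L u\<bar> \<le> 2 * rho"
proof -
  note hb = hess_bound[OF grad hess hess_cont scale_inv rho_def]
  have uu: "u \<bullet> u = 1" using u by (simp add: dot_square_norm)
  have ww: "w \<bullet> w = 1" using w by (simp add: dot_square_norm)
  have "norm (hessL u) \<le> rho / norm u ^ 2" using u by (intro hb) auto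
  then have rho0: "rho \<ge> 0" using u by (metis div_by_1 norm_ge_zero one_power2 order_trans)
  have seg: "z \<noteq> 0 \<and> norm (hessL z) \<le> 2 * rho" if z: "z \<in> closed_segment u w" for z
  proof -
    obtain s where s: "0 \<le> s" "s \<le> 1" and zs: "z = (1 - s) *\<^sub>R u + s *\<^sub>R w"
      using z unfolding closed_segment_def by auto
    have "norm z ^ 2 = (1-s)^2 * (u \<bullet> u) + s^2 * (w \<bullet> w) + 2 * s * (1 - s) * (u \<bullet> w)"
      unfolding zs power2_norm_eq_inner
      by (simp add: inner_add_left inner_add_right inner_commute power2_eq_square algebra_simps)
    also have "\<dots> \<ge> 1/2"
    proof -
      have "2 * s * (1 - s) * (u \<bullet> w) \<ge> 0" using s uw by simp
      moreover have "(1-s)^2 + s^2 \<ge> (1/2::real)"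
        using sum_squares_ge_zero[of "s - 1/2" 0] by (simp add: power2_eq_square algebra_simps)
      ultimately show ?thesis using uu ww by simp
    qed
    finally have nz: "norm z ^ 2 \<ge> 1/2" .
    then have "z \<noteq> 0" by auto
    moreover have "norm (hessL z) \<le> rho / norm z ^ 2" using hb[of z] \<open>z \<noteq> 0\<close> by blast
    moreover have "rho / norm z ^ 2 \<le> 2 * rho"
    proof -
      have "rho / norm z ^ 2 \<le> rho / (1/2)"
        using nz rho0 by (intro divide_left_mono) auto
      then show ?thesis by simp
    qed
    ultimately show ?thesis by simp
  qed
  have nd: "norm (w - u) ^ 2 \<le> 2"
    unfolding power2_norm_eq_inner using uu ww uw
    by (simp add: inner_diff_left inner_diff_right inner_commute)
  have "L w \<le> L u + gradL u \<bullet> (w - u) + (2*rho) * norm (w - u)^2 / 2"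
    by (rule taylor2(1)[OF grad hess seg])
  moreover have "L w \<ge> L u + gradL u \<bullet> (w - u) - (2*rho) * norm (w - u)^2 / 2"
    by (rule taylor2(2)[OF grad hess seg])
  moreover have "(2*rho) * norm (w - u)^2 / 2 \<le> 2 * rho"
    using mult_left_mono[OF nd rho0] by simp
  ultimately show ?thesis using gu by (simp add: abs_le_iff)
qed


lemma full_range:
  fixes L :: "'a::euclidean_space \<Rightarrow> real" and gradL :: "'a \<Rightarrow> 'a"
    and hessL :: "'a \<Rightarrow> 'a \<Rightarrow>\<^sub>L 'a"
  assumes grad: "\<And>y. y \<noteq> 0 \<Longrightarrow> (L has_derivative (\<lambda>h. gradL y \<bullet> h)) (at y)"
    and hess: "\<And>y. y \<noteq> 0 \<Longrightarrow> (gradL has_derivative blinfun_apply (hessL y)) (at y)"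
    and hess_cont: "continuous_on (- {0}) hessL"
    and scale_inv: "\<And>c y. c > 0 \<Longrightarrow> y \<noteq> 0 \<Longrightarrow> L (c *\<^sub>R y) = L y"
    and rho_def: "rho = (SUP y\<in>sphere 0 1. norm (hessL y))"
    and a: "(a::'a) \<noteq> 0" and b: "(b::'a) \<noteq> 0" and ab: "a \<bullet> b = 0"
  shows "\<forall>y z. y \<noteq> 0 \<longrightarrow> z \<noteq> 0 \<longrightarrow> L y - L z \<le> 4 * rho"
proof -
  note hr = half_range[OF grad hess hess_cont scale_inv rho_def]
  have contL: "continuous_on (sphere 0 1) L"
    by (rule continuous_at_imp_continuous_on) (auto intro: has_derivative_continuous[OF grad])
  have ne: "sphere (0::'a) 1 \<noteq> {}"
    using a by (auto intro!: exI[of _ "(1 / norm a) *\<^sub>R a"])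
  obtain u where u: "u \<in> sphere 0 1" and umax: "\<forall>y\<in>sphere 0 1. L y \<le> L u"
    using continuous_attains_sup[OF compact_sphere ne contL] by blast
  obtain v where v: "v \<in> sphere 0 1" and vmin: "\<forall>y\<in>sphere 0 1. L v \<le> L y"
    using continuous_attains_inf[OF compact_sphere ne contL] by blast
  have nrm: "L y = L ((1 / norm y) *\<^sub>R y) \<and> (1 / norm y) *\<^sub>R y \<in> sphere 0 1" if "y \<noteq> 0" for y
    using scale_inv[of "1 / norm y" y] that by simp
  have glob: "L y \<le> L u \<and> L v \<le> L y" if "y \<in> -{0}" for y
    using nrm[of y] that umax vmin by auto
  have u0: "u \<in> -{0}" and v0: "v \<in> -{0}" using u v by auto
  have gz: "gradL p = 0" if "p \<in> -{0}" and mm: "(\<forall>y\<in>-{0}. L y \<le> L p) \<or> (\<forall>y\<in>-{0}. L p \<le> L y)" for p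
  proof -
    have "(\<lambda>h. gradL p \<bullet> h) = (\<lambda>v. 0)"
      using differential_zero_maxmin[OF that(1) open_Compl[OF closed_singleton] grad mm] that(1) by auto
    from fun_cong[OF this, of "gradL p"] show ?thesis by simp
  qed
  have gu: "gradL u = 0" using gz[OF u0] glob by blast
  have gv: "gradL v = 0" using gz[OF v0] glob by blast
  have nu: "norm u = 1" and nv: "norm v = 1" using u v by auto
  have uu: "u \<bullet> u = 1" using nu by (simp add: dot_square_norm)
  have "\<exists>w. norm w = 1 \<and> u \<bullet> w \<ge> 0 \<and> v \<bullet> w \<ge> 0"
  proof (cases "u + v = 0")
    case False
    define w where "w = (1 / norm (u + v)) *\<^sub>R (u + v)"
    have uv: "u \<bullet> v \<ge> -1" using Cauchy_Schwarz_ineq2[of u v] nu nv by auto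
    have vv: "v \<bullet> v = 1" using nv by (simp add: dot_square_norm)
    have "u \<bullet> w = (1 + u \<bullet> v) / norm (u + v)" using uu
      by (simp add: w_def inner_add_right)
    moreover have "v \<bullet> w = (1 + u \<bullet> v) / norm (u + v)" using vv
      by (simp add: w_def inner_add_right inner_commute)
    ultimately show ?thesis using False uv by (intro exI[of _ w]) (auto simp: w_def)
  next
    case True
    then have vu: "v = - u" by (simp add: eq_neg_iff_add_eq_0 add.commute)
    define wa where "wa = a - (a \<bullet> u) *\<^sub>R u"
    define wb where "wb = b - (b \<bullet> u) *\<^sub>R u"
    have "wa \<noteq> 0 \<or> wb \<noteq> 0"
    proof (rule ccontr)
      assume "\<not> (wa \<noteq> 0 \<or> wb \<noteq> 0)"
      then have aa: "a = (a \<bullet> u) *\<^sub>R u" and bb: "b = (b \<bullet> u) *\<^sub>R u" by (auto simp: wa_def wb_def)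
      have "a \<bullet> b = (a \<bullet> u) * (b \<bullet> u)"
        by (subst aa, subst bb) (simp add: uu)
      then have "a \<bullet> u = 0 \<or> b \<bullet> u = 0" using ab by simp
      then show False using aa bb a b by auto
    qed
    moreover have "u \<bullet> wa = 0" "u \<bullet> wb = 0"
      by (simp_all add: wa_def wb_def inner_diff_right uu inner_commute)
    ultimately obtain w0 where w0: "w0 \<noteq> 0" "u \<bullet> w0 = 0" by blast
    show ?thesis using w0 vu
      by (intro exI[of _ "(1 / norm w0) *\<^sub>R w0"]) auto
  qed
  then obtain w where w: "norm w = 1" "u \<bullet> w \<ge> 0" "v \<bullet> w \<ge> 0" by blast
  have "\<bar>L w - L u\<bar> \<le> 2 * rho" by (rule hr) (use nu w gu in auto)
  moreover have "\<bar>L w - L v\<bar> \<le> 2 * rho" by (rule hr) (use nv w gv in auto)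
  ultimately have "L u - L v \<le> 4 * rho" by (simp add: abs_le_iff)
  show ?thesis
  proof (intro allI impI)
    fix y z :: 'a assume "y \<noteq> 0" "z \<noteq> 0"
    then have "L y \<le> L u" "L v \<le> L z" using glob[of y] glob[of z] by auto
    then show "L y - L z \<le> 4 * rho" using \<open>L u - L v \<le> 4 * rho\<close> by linarith
  qed
qed


theorem mainTheorem12:
  fixes L :: "'a::euclidean_space \<Rightarrow> real"
    and gradL :: "'a \<Rightarrow> 'a"
    and hessL :: "'a \<Rightarrow> 'a \<Rightarrow>\<^sub>L 'a"
    and x :: "nat \<Rightarrow> 'a"
    and rho eta lam :: real
  assumes grad: "\<And>y. y \<noteq> 0 \<Longrightarrow> (L has_derivative (\<lambda>h. gradL y \<bullet> h)) (at y)"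
    and hess: "\<And>y. y \<noteq> 0 \<Longrightarrow> (gradL has_derivative blinfun_apply (hessL y)) (at y)"
    and hess_cont: "continuous_on (- {0}) hessL"
    and scale_inv: "\<And>c y. c > 0 \<Longrightarrow> y \<noteq> 0 \<Longrightarrow> L (c *\<^sub>R y) = L y"
    and rho_def: "rho = (SUP y\<in>sphere 0 1. norm (hessL y))"
    and rho_pos: "rho > 0"
    and eta_pos: "eta > 0" and lam_pos: "lam > 0"
    and eta_lam: "eta * lam \<le> 1/2"
    and init: "norm (x 0) ^ 2 \<ge> pi ^ 2 * rho * eta"
    and step: "\<And>t. x (Suc t) = (1 - eta * lam) *\<^sub>R x t - eta *\<^sub>R gradL (x t)"
  shows "let T0 = nat \<lceil>(1 / (2 * eta * lam)) * ln (2 * norm (x 0) ^ 2 / (rho * pi ^ 2 * eta))\<rceil>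
         in (MIN t\<in>{0..T0}. norm (gradL (x t /\<^sub>R norm (x t))) ^ 2) \<le> 8 * pi ^ 4 * rho ^ 2 * lam * eta"
proof -
  define T0 where "T0 = nat \<lceil>(1 / (2 * eta * lam)) * ln (2 * norm (x 0) ^ 2 / (rho * pi ^ 2 * eta))\<rceil>"
  define f where "f t = norm (gradL (x t /\<^sub>R norm (x t))) ^ 2" for t
  define B where "B = 8 * pi ^ 4 * rho ^ 2 * lam * eta"
  define e where "e = eta * lam"
  define a where "a = (1 - e) ^ 2"
  define P where "P = pi ^ 2 * rho * eta"
  define n where "n t = norm (x t) ^ 2" for t
  define q where "q t = norm (gradL (x t)) ^ 2" for t
  have e0: "0 < e" and e1: "e \<le> 1/2" using eta_pos lam_pos eta_lam by (auto simp: e_def)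
  have a0: "0 < a" and a1: "a \<le> 1" using e0 e1 by (auto simp: a_def power_le_one)
  have P0: "P > 0" using rho_pos eta_pos by (simp add: P_def)
  have pi2: "pi ^ 2 > 9"
  proof -
    have "(3::real) ^ 2 < pi ^ 2" using pi_gt3 by (intro power_strict_mono) auto
    then show ?thesis by simp
  qed
  have n0: "n 0 \<ge> P" using init by (simp add: n_def P_def)
  have q0: "q t \<ge> 0" for t by (simp add: q_def)
  have nrec: "n (Suc t) = a * n t + eta ^ 2 * q t" if "x t \<noteq> 0" for t
  proof -
    have o: "gradL (x t) \<bullet> x t = 0" by (rule grad_orth[OF grad scale_inv that])
    show ?thesis
      unfolding n_def q_def a_def e_def step power2_norm_eq_inner
      using o by (simp add: inner_diff_left inner_diff_right inner_commute power2_eq_square algebra_simps)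
  qed
  have nz: "x t \<noteq> 0" for t
  proof (induction t)
    case 0 show ?case using n0 P0 by (auto simp: n_def)
  next
    case (Suc t)
    have "n t > 0" using Suc by (simp add: n_def)
    then have "n (Suc t) > 0" using nrec[OF Suc] a0 q0[of t]
      by (simp add: add_pos_nonneg)
    then show ?case by (auto simp: n_def)
  qed
  have npos: "n t > 0" for t using nz[of t] by (simp add: n_def)
  have nup: "n T \<le> a ^ T * n 0 + (\<Sum>t<T. eta ^ 2 * q t)" for T
  proof (induction T)
    case 0 show ?case by simp
  next
    case (Suc T)
    have S0: "(\<Sum>t<T. eta ^ 2 * q t) \<ge> 0" using q0 by (simp add: sum_nonneg)
    have "n (Suc T) = a * n T + eta ^ 2 * q T" by (rule nrec[OF nz])
    also have "\<dots> \<le> a * (a ^ T * n 0 + (\<Sum>t<T. eta ^ 2 * q t)) + eta ^ 2 * q T"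
      using Suc a0 by simp
    also have "\<dots> \<le> a ^ Suc T * n 0 + (\<Sum>t<T. eta ^ 2 * q t) + eta ^ 2 * q T"
      using mult_left_le_one_le[OF S0 _ a1] a0 by (simp add: algebra_simps)
    finally show ?case by simp
  qed
  have descent: "L (x (Suc t)) \<le> L (x t) - (8/9) * eta * q t" if nt: "n t \<ge> P" for t
  proof -
    define g where "g = gradL (x t)"
    define eta' where "eta' = eta / (1 - e)"
    define z where "z = x t - eta' *\<^sub>R g"
    have e1': "1 - e > 0" using e1 by simp
    have o: "g \<bullet> x t = 0" unfolding g_def by (rule grad_orth[OF grad scale_inv nz])
    have ee: "(1 - e) * eta' = eta" using e1' by (simp add: eta'_def)
    have "(1 - e) *\<^sub>R z = (1 - e) *\<^sub>R x t - ((1 - e) * eta') *\<^sub>R g"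
      by (simp add: z_def scaleR_diff_right)
    moreover have "x (Suc t) = (1 - e) *\<^sub>R x t - eta *\<^sub>R g"
      by (simp add: step e_def g_def)
    ultimately have xs: "x (Suc t) = (1 - e) *\<^sub>R z"
      by (simp add: ee)
    have z0: "z \<noteq> 0" using xs nz[of "Suc t"] by auto
    have Lz: "L (x (Suc t)) = L z" using xs scale_inv[OF e1' z0] by simp
    have et1: "eta' \<ge> eta" and et2: "eta' \<le> 2 * eta"
      using e0 e1 eta_pos by (auto simp: eta'_def field_simps)
    have seg: "y \<noteq> 0 \<and> norm (hessL y) \<le> rho / n t" if y: "y \<in> closed_segment (x t) z" for y
    proof -
      obtain s where s: "0 \<le> s" "s \<le> 1" and ys: "y = (1 - s) *\<^sub>R x t + s *\<^sub>R z"
        using y unfolding closed_segment_def by auto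
      have yv: "y = x t - (s * eta') *\<^sub>R g" by (simp add: ys z_def algebra_simps)
      have "norm y ^ 2 = n t + (s * eta') ^ 2 * (g \<bullet> g)"
        unfolding yv n_def power2_norm_eq_inner using o
        by (simp add: inner_diff_left inner_diff_right inner_commute power2_eq_square algebra_simps)
      then have ny: "norm y ^ 2 \<ge> n t" by simp
      then have "y \<noteq> 0" using npos[of t] by auto
      moreover have "norm (hessL y) \<le> rho / norm y ^ 2"
        using hess_bound[OF grad hess hess_cont scale_inv rho_def \<open>y \<noteq> 0\<close>] .
      moreover have "rho / norm y ^ 2 \<le> rho / n t"
      proof (rule divide_left_mono)
        show "0 < norm y ^ 2 * n t" using ny npos[of t] by (intro mult_pos_pos) auto
      qed (use ny rho_pos in auto)
      ultimately show ?thesis by simp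
    qed
    have "L z \<le> L (x t) + gradL (x t) \<bullet> (z - x t) + (rho / n t) * norm (z - x t) ^ 2 / 2"
      by (rule taylor2(1)[OF grad hess seg])
    also have "\<dots> = L (x t) - eta' * q t + (rho * eta' / (2 * n t)) * eta' * q t"
    proof -
      have "norm (z - x t) ^ 2 = eta' ^ 2 * q t"
        by (simp add: z_def g_def q_def power_mult_distrib)
      moreover have "gradL (x t) \<bullet> (z - x t) = - eta' * q t"
        by (simp add: z_def g_def q_def dot_square_norm)
      ultimately show ?thesis using npos[of t] by (simp add: power2_eq_square)
    qed
    also have "\<dots> \<le> L (x t) - (8/9) * eta * q t"
    proof -
      have r: "rho * eta' \<le> rho * (2 * eta)" using et2 rho_pos by simp
      moreover have n18: "2 * n t \<ge> 18 * rho * eta"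
      proof -
        have "18 * rho * eta \<le> 2 * P" using pi2 rho_pos eta_pos by (simp add: P_def)
        then show ?thesis using nt by simp
      qed
      ultimately have "rho * eta' * 9 \<le> 2 * n t" by linarith
      then have c: "rho * eta' / (2 * n t) \<le> 1/9"
        using npos[of t] by (simp add: divide_le_eq)
      have "(rho * eta' / (2 * n t)) * (eta' * q t) \<le> (1/9) * (eta' * q t)"
        using c et1 eta_pos q0[of t] by (intro mult_right_mono) auto
      moreover have "(8/9) * eta * q t \<le> (8/9) * eta' * q t"
        using et1 q0[of t] by (simp add: mult_right_mono)
      ultimately show ?thesis by (simp add: algebra_simps)
    qed
    finally show ?thesis using Lz by simp
  qed
  have fnq: "f t = n t * q t" for t
  proof -
    have nx: "norm (x t) > 0" using nz[of t] by simp
    have "(1 / norm (x t)) *\<^sub>R gradL ((1 / norm (x t)) *\<^sub>R x t) = gradL (x t)"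
      by (rule grad_hom[OF grad scale_inv]) (use nx nz[of t] in auto)
    then have "norm (x t) *\<^sub>R gradL (x t) = norm (x t) *\<^sub>R ((1 / norm (x t)) *\<^sub>R gradL ((1 / norm (x t)) *\<^sub>R x t))"
      by simp
    also have "\<dots> = gradL ((1 / norm (x t)) *\<^sub>R x t)" using nx by simp
    finally have geq: "gradL ((1 / norm (x t)) *\<^sub>R x t) = norm (x t) *\<^sub>R gradL (x t)" by simp
    have xs: "x t /\<^sub>R norm (x t) = (1 / norm (x t)) *\<^sub>R x t" by (simp add: inverse_eq_divide)
    have "f t = norm (norm (x t) *\<^sub>R gradL (x t)) ^ 2" by (simp only: f_def xs geq)
    also have "\<dots> = n t * q t" by (simp add: n_def q_def power_mult_distrib)
    finally show ?thesis .
  qed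
  have fin: "finite (f ` {0..T0})" by simp
  have Min_le': "(MIN t\<in>{0..T0}. f t) \<le> f t" if "t \<le> T0" for t
    using that by (intro Min_le) auto
  have B0: "B \<ge> 0" using rho_pos eta_pos lam_pos by (simp add: B_def)
  have goal: "(MIN t\<in>{0..T0}. f t) \<le> B"
  proof (cases "gradL (x 0) = 0")
    case True
    then have "f 0 = 0" by (simp add: fnq q_def)
    then show ?thesis using Min_le'[OF le0] B0 by linarith
  next
    case False
    have o0: "x 0 \<bullet> gradL (x 0) = 0"
      using grad_orth[OF grad scale_inv nz[of 0]] by (simp add: inner_commute)
    have rng: "\<forall>y z. y \<noteq> 0 \<longrightarrow> z \<noteq> 0 \<longrightarrow> L y - L z \<le> 4 * rho"
      by (rule full_range[OF grad hess hess_cont scale_inv rho_def]) (use nz[of 0] False o0 in auto)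
    have ex: "\<exists>t\<le>T0. n t < P"
    proof (rule ccontr)
      assume "\<not> (\<exists>t\<le>T0. n t < P)"
      then have all: "n t \<ge> P" if "t \<le> T0" for t using that by force
      have tel: "T \<le> T0 \<longrightarrow> (8/9) * eta * (\<Sum>t<T. q t) \<le> L (x 0) - L (x T)" for T
      proof (induction T)
        case 0 show ?case by simp
      next
        case (Suc T)
        show ?case
        proof
          assume "Suc T \<le> T0"
          then have "T \<le> T0" "n T \<ge> P" using all by auto
          then have "(8/9) * eta * (\<Sum>t<T. q t) \<le> L (x 0) - L (x T)" using Suc by simp
          moreover have "L (x (Suc T)) \<le> L (x T) - (8/9) * eta * q T"
            using descent[OF \<open>n T \<ge> P\<close>] .
          ultimately show "(8/9) * eta * (\<Sum>t<Suc T. q t) \<le> L (x 0) - L (x (Suc T))"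
            by (simp add: distrib_left)
        qed
      qed
      have "(8/9) * eta * (\<Sum>t<T0. q t) \<le> 4 * rho"
        using tel[of T0] rng nz[of 0] nz[of T0] by force
      then have es: "eta * (\<Sum>t<T0. q t) \<le> 9/2 * rho" by simp
      have "(\<Sum>t<T0. eta ^ 2 * q t) = eta * (eta * (\<Sum>t<T0. q t))"
        by (simp add: sum_distrib_left power2_eq_square mult.assoc)
      also have "\<dots> \<le> eta * (9/2 * rho)" using es eta_pos by (intro mult_left_mono) auto
      finally have sq: "(\<Sum>t<T0. eta ^ 2 * q t) \<le> 9/2 * rho * eta" by (simp add: mult_ac)
      have aT: "a ^ T0 * n 0 \<le> P / 2"
      proof -
        define r where "r = (1 / (2 * eta * lam)) * ln (2 * n 0 / P)"
        have T0r: "T0 = nat \<lceil>r\<rceil>"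
          by (simp add: T0_def r_def n_def P_def mult_ac)
        have rat: "2 * n 0 / P \<ge> 2" using n0 P0 by (simp add: le_divide_eq)
        then have ln0: "ln (2 * n 0 / P) \<ge> 0" by simp
        have r0: "r \<ge> 0" using ln0 eta_pos lam_pos by (simp add: r_def)
        have "real T0 \<ge> r" using r0 by (simp add: T0r)
        then have "2 * e * real T0 \<ge> 2 * e * r" using e0 by simp
        also have "2 * e * r = ln (2 * n 0 / P)"
          using eta_pos lam_pos by (simp add: r_def e_def)
        finally have lnT: "ln (2 * n 0 / P) \<le> 2 * e * real T0" .
        have "1 - e \<le> exp (- e)" using exp_ge_add_one_self[of "- e"] by simp
        then have "a \<le> exp (- e) ^ 2" unfolding a_def using e1 by (intro power_mono) auto
        also have "\<dots> = exp (- (2 * e))" by (simp add: power2_eq_square exp_add[symmetric])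
        finally have "a ^ T0 \<le> exp (- (2 * e)) ^ T0" using a0 by (intro power_mono) auto
        also have "\<dots> = exp (- (2 * e * real T0))"
          by (simp add: exp_of_nat_mult[symmetric] mult_ac)
        also have "\<dots> \<le> exp (- ln (2 * n 0 / P))" using lnT by simp
        also have "\<dots> = P / (2 * n 0)" using rat P0 by (simp add: exp_minus)
        finally have "a ^ T0 * n 0 \<le> P / (2 * n 0) * n 0"
          using npos[of 0] by (intro mult_right_mono) auto
        then show ?thesis using npos[of 0] by simp
      qed
      have "n T0 \<le> P / 2 + 9/2 * rho * eta" using nup[of T0] aT sq by linarith
      moreover have "9/2 * rho * eta < P / 2" using pi2 rho_pos eta_pos by (simp add: P_def)
      ultimately have "n T0 < P" by linarith
      then show False using all[of T0] by simp
    qed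
    then obtain t where t: "t \<le> T0" "n t < P" by blast
    have "\<not> n 0 < P" using n0 by simp
    from ex_least_nat_less[of "\<lambda>t. n t < P", OF t(2) this]
    obtain k where k: "k < t" "\<not> n k < P" "n (Suc k) < P" by auto
    define m where "m = n k"
    have mP: "m \<ge> P" using k by (simp add: m_def)
    have m0: "m > 0" using mP P0 by simp
    have hq: "eta ^ 2 * q k < P - a * m" using k(3) nrec[OF nz[of k]] by (simp add: m_def)
    have fk: "eta ^ 2 * f k < m * (P - a * m)"
      using mult_strict_left_mono[OF hq m0] by (simp add: fnq m_def mult_ac)
    have key: "m * (P - a * m) \<le> 8 * e * P ^ 2"
    proof (cases "a \<ge> 1/2")
      case True
      have "m * (P - a * m) - P * (P - a * P) = (m - P) * (P - a * (m + P))"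
        by (simp add: algebra_simps)
      also have "\<dots> \<le> 0"
      proof (rule mult_nonneg_nonpos)
        show "m - P \<ge> 0" using mP by simp
        have "a * (m + P) \<ge> (1/2) * (P + P)" using True mP P0 by (intro mult_mono) auto
        then show "P - a * (m + P) \<le> 0" by simp
      qed
      finally have "m * (P - a * m) \<le> P * (P - a * P)" by simp
      also have "\<dots> = (2 * e - e ^ 2) * P ^ 2" by (simp add: a_def power2_eq_square algebra_simps)
      also have "\<dots> \<le> 8 * e * P ^ 2"
      proof -
        have "2 * e - e ^ 2 \<le> 8 * e" using e0 zero_le_power2[of e] by linarith
        then show ?thesis by (rule mult_right_mono) simp
      qed
      finally show ?thesis .
    next
      case False
      have e4: "e > 1/4"
      proof (rule ccontr)
        assume "\<not> e > 1/4"
        then have "(3/4::real) ^ 2 \<le> (1 - e) ^ 2" using e0 by (intro power_mono) auto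
        then show False using False by (simp add: a_def power2_eq_square)
      qed
      have a4: "a \<ge> 1/4"
      proof -
        have "(1/2::real) ^ 2 \<le> (1 - e) ^ 2" using e1 by (intro power_mono) auto
        then show ?thesis by (simp add: a_def power2_eq_square)
      qed
      have "4 * a * (m * (P - a * m)) \<le> P ^ 2"
        using sum_squares_ge_zero[of "P - 2 * a * m" 0] by (simp add: power2_eq_square algebra_simps)
      moreover have "4 * a * (m * (P - a * m)) \<ge> 1 * (m * (P - a * m)) \<or> m * (P - a * m) \<le> 0"
      proof (cases "m * (P - a * m) \<le> 0")
        case False
        then show ?thesis using a4 by (intro disjI1 mult_right_mono) auto
      qed simp
      moreover have "P ^ 2 \<le> 8 * e * P ^ 2"
      proof -
        have "1 * P ^ 2 \<le> (8 * e) * P ^ 2" using e4 by (intro mult_right_mono) auto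
        then show ?thesis by simp
      qed
      ultimately show ?thesis using e0 P0 by (smt (verit) mult_nonneg_nonneg zero_le_power2)
    qed
    have "eta ^ 2 * f k \<le> eta ^ 2 * B"
    proof -
      have "eta ^ 2 * B = 8 * e * P ^ 2"
        by (simp add: B_def e_def P_def power2_eq_square power4_eq_xxxx)
      then show ?thesis using fk key by simp
    qed
    then have fkB: "f k \<le> B" using eta_pos by simp
    have kT: "k \<le> T0" using k t by simp
    show ?thesis using Min_le'[OF kT] fkB by linarith
  qed
  show ?thesis using goal by (simp add: Let_def T0_def f_def B_def)
qed

end
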